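(* Let $R$ be as in the standing setup, and let $x\in R$ with $v(x)=e$ (so $xR$ is a minimal reduction of $m$). The following are equivalent: (1) The $m$-adic filtration is essentially divisible with respect to $xR$. (2) $v(m^i\cap xR)=v(m^i)\cap v(xR)$ for all $i\ge 0$. (3) $v(m^i+xR)=v(m^i)\cup v(xR)$ for all $i\ge 0$. (4) $b_j=c_j$ for $j=0,\ldots,e-1$.
   Context: Standing setup: $k$ is a field and $R$ is a complete local domain with $k\subseteq R\subseteq k[[t]]$, residue field $k$, maximal ideal $m$, and nonzero conductor $(R:k[[t]])\neq 0$. Let $v$ be the $t$-adic valuation, $S=v(R)=\{v(r): r\in R, r\neq 0\}$, and $e$ the smallest positive element of $S$ (the multiplicity). For a nonzero ideal $I$, $v(I)=\{v(a): a\in I, a\ne0\}$; $m^0=R$. The Apery set of $S$ with respect to $e$ is $\{w_0,\ldots,w_{e-1}\}$ where $w_j$ is the smallest element of $S$ congruent to $j \pmod e$. For $a\in R$, $\operatorname{ord}(a)=\max\{i: a\in m^i\}$; for $s\in S$, $\operatorname{vord}(s)=\max\{i: s\in v(m^i)\}$. Given $x\in R$ with $v(x)=e$, the $m$-adic filtration is essentially divisible with respect to $xR$ if for every $u\in v(xR)$ there is $a\in xR$ with $v(a)=u$ and $\operatorname{ord}(a)=\operatorname{vord}(u)$. Define $b_j=\max\{i: w_j\in v(m^i)\}$ and $c_j=\max\{i: w_j\in v(m^i+xR)\}$ for $j=0,\dots,e-1$. *)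

theory Defs
  imports "HOL-Computational_Algebra.Formal_Power_Series"
begin

text \<open>Standing setup: R is a subring of k[[t]] containing k, local with maximal
ideal m = R \<inter> t k[[t]] (residue field k), with nonzero conductor.\<close>

definition setup_ring :: "'a::field fps set \<Rightarrow> bool" where
  "setup_ring R \<longleftrightarrow>
     (\<forall>c. fps_const c \<in> R) \<and>
     (\<forall>a\<in>R. \<forall>b\<in>R. a + b \<in> R \<and> a * b \<in> R \<and> - a \<in> R) \<and>
     (\<forall>r\<in>R. fps_nth r 0 \<noteq> 0 \<longrightarrow> inverse r \<in> R) \<and>
     (\<exists>f. f \<noteq> 0 \<and> (\<forall>g. f * g \<in> R))"

definition max_ideal :: "'a::field fps set \<Rightarrow> 'a fps set" where
  "max_ideal R = {r \<in> R. fps_nth r 0 = 0}"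

definition ideal_span_R :: "'a::field fps set \<Rightarrow> 'a fps set \<Rightarrow> 'a fps set" where
  "ideal_span_R R S = {(\<Sum>j<(n::nat). r j * s j) | n r s. \<forall>j<n. r j \<in> R \<and> s j \<in> S}"

fun mpow :: "'a::field fps set \<Rightarrow> nat \<Rightarrow> 'a fps set" where
  "mpow R 0 = R"
| "mpow R (Suc i) = ideal_span_R R {a * b | a b. a \<in> max_ideal R \<and> b \<in> mpow R i}"

definition val_set :: "'a::field fps set \<Rightarrow> nat set" where
  "val_set I = {subdegree a | a. a \<in> I \<and> a \<noteq> 0}"

definition prin_ideal :: "'a::field fps set \<Rightarrow> 'a fps \<Rightarrow> 'a fps set" where
  "prin_ideal R x = {x * r | r. r \<in> R}"

definition sum_set :: "'a::field fps set \<Rightarrow> 'a fps set \<Rightarrow> 'a fps set" where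
  "sum_set I J = {a + b | a b. a \<in> I \<and> b \<in> J}"

definition mult_e :: "'a::field fps set \<Rightarrow> nat" where
  "mult_e R = (LEAST s. s \<in> val_set R \<and> 0 < s)"

definition apery :: "'a::field fps set \<Rightarrow> nat \<Rightarrow> nat" where
  "apery R j = (LEAST s. s \<in> val_set R \<and> s mod mult_e R = j)"

definition ord_m :: "'a::field fps set \<Rightarrow> 'a fps \<Rightarrow> nat" where
  "ord_m R a = (GREATEST i. a \<in> mpow R i)"

definition vord :: "'a::field fps set \<Rightarrow> nat \<Rightarrow> nat" where
  "vord R s = (GREATEST i. s \<in> val_set (mpow R i))"

definition ess_divisible :: "'a::field fps set \<Rightarrow> 'a fps \<Rightarrow> bool" where
  "ess_divisible R x \<longleftrightarrow>
     (\<forall>u \<in> val_set (prin_ideal R x). \<exists>a \<in> prin_ideal R x.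
         a \<noteq> 0 \<and> subdegree a = u \<and> ord_m R a = vord R u)"

definition b_idx :: "'a::field fps set \<Rightarrow> nat \<Rightarrow> nat" where
  "b_idx R j = (GREATEST i. apery R j \<in> val_set (mpow R i))"

definition c_idx :: "'a::field fps set \<Rightarrow> 'a fps \<Rightarrow> nat \<Rightarrow> nat" where
  "c_idx R x j = (GREATEST i. apery R j \<in> val_set (sum_set (mpow R i) (prin_ideal R x)))"

end

theory Submission
  imports Defs
begin


context fixes R :: "'a::field fps set" assumes SR: "setup_ring R"
begin

lemma R_const: "fps_const c \<in> R" using SR unfolding setup_ring_def by blast
lemma R_0: "0 \<in> R" using R_const[of 0] by simp
lemma R_1: "1 \<in> R" using R_const[of 1] by simp
lemma R_add: "a \<in> R \<Longrightarrow> b \<in> R \<Longrightarrow> a + b \<in> R" using SR unfolding setup_ring_def by blast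
lemma R_mult: "a \<in> R \<Longrightarrow> b \<in> R \<Longrightarrow> a * b \<in> R" using SR unfolding setup_ring_def by blast
lemma R_uminus: "a \<in> R \<Longrightarrow> - a \<in> R" using SR unfolding setup_ring_def by blast
lemma R_diff: "a \<in> R \<Longrightarrow> b \<in> R \<Longrightarrow> a - b \<in> R"
  using R_add[of a "-b"] R_uminus[of b] by simp
lemma R_cond: "\<exists>f. f \<noteq> 0 \<and> (\<forall>g. f * g \<in> R)" using SR unfolding setup_ring_def by blast

lemma R_sum: "(\<And>j. j < (n::nat) \<Longrightarrow> f j \<in> R) \<Longrightarrow> (\<Sum>j<n. f j) \<in> R"
  by (induction n) (auto simp: R_0 R_add)

lemma span_mem: "a \<in> ideal_span_R R S \<longleftrightarrow> (\<exists>n r s. a = (\<Sum>j<(n::nat). r j * s j) \<and> (\<forall>j<n. r j \<in> R \<and> s j \<in> S))"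
  unfolding ideal_span_R_def by blast

lemma span_0: "0 \<in> ideal_span_R R S"
  unfolding span_mem by (rule exI[of _ 0]) simp

lemma span_step: assumes "a \<in> ideal_span_R R S" "c \<in> R" "s \<in> S"
  shows "a + c * s \<in> ideal_span_R R S"
proof -
  obtain n r t where a: "a = (\<Sum>j<(n::nat). r j * t j)" "\<forall>j<n. r j \<in> R \<and> t j \<in> S"
    using assms(1) unfolding span_mem by blast
  let ?r = "r(n := c)" and ?t = "t(n := s)"
  have "a + c * s = (\<Sum>j<Suc n. ?r j * ?t j)"
    using a(1) by (simp add: lessThan_Suc)
  moreover have "\<forall>j<Suc n. ?r j \<in> R \<and> ?t j \<in> S" using a(2) assms by (auto simp: less_Suc_eq)
  ultimately show ?thesis unfolding span_mem by blast
qed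

lemma span_gen: "s \<in> S \<Longrightarrow> s \<in> ideal_span_R R S"
  using span_step[OF span_0 R_1, of s S] by simp

lemma span_add: assumes "a \<in> ideal_span_R R S" "b \<in> ideal_span_R R S"
  shows "a + b \<in> ideal_span_R R S"
proof -
  obtain n r t where b: "b = (\<Sum>j<(n::nat). r j * t j)" "\<forall>j<n. r j \<in> R \<and> t j \<in> S"
    using assms(2) unfolding span_mem by blast
  have "\<forall>m\<le>n. a + (\<Sum>j<m. r j * t j) \<in> ideal_span_R R S"
  proof (intro allI impI)
    fix m assume "m \<le> n" thus "a + (\<Sum>j<m. r j * t j) \<in> ideal_span_R R S"
    proof (induction m)
      case 0 then show ?case using assms(1) by simp
    next
      case (Suc m)
      then have "a + (\<Sum>j<m. r j * t j) + r m * t m \<in> ideal_span_R R S"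
        using span_step b(2) by auto
      then show ?case by (simp add: add.assoc)
    qed
  qed
  then show ?thesis using b(1) by auto
qed

lemma span_mult: assumes "a \<in> ideal_span_R R S" "c \<in> R"
  shows "c * a \<in> ideal_span_R R S"
proof -
  obtain n r t where a: "a = (\<Sum>j<(n::nat). r j * t j)" "\<forall>j<n. r j \<in> R \<and> t j \<in> S"
    using assms(1) unfolding span_mem by blast
  have "c * a = (\<Sum>j<n. (c * r j) * t j)" using a(1) by (simp add: sum_distrib_left mult.assoc)
  moreover have "\<forall>j<n. c * r j \<in> R \<and> t j \<in> S" using a(2) assms(2) R_mult by auto
  ultimately show ?thesis unfolding span_mem
    by (intro exI[of _ n] exI[of _ "\<lambda>j. c * r j"] exI[of _ t]) simp
qed

lemma span_mono: assumes "S \<subseteq> T" shows "ideal_span_R R S \<subseteq> ideal_span_R R T"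
proof
  fix a assume "a \<in> ideal_span_R R S"
  then obtain n r t where a: "a = (\<Sum>j<(n::nat). r j * t j)" "\<forall>j<n. r j \<in> R \<and> t j \<in> S"
    unfolding span_mem by blast
  then show "a \<in> ideal_span_R R T" unfolding span_mem
    by (intro exI[of _ n] exI[of _ r] exI[of _ t]) (use assms in auto)
qed

lemma span_sub_R: assumes "S \<subseteq> R" shows "ideal_span_R R S \<subseteq> R"
proof
  fix a assume "a \<in> ideal_span_R R S"
  then obtain n r t where a: "a = (\<Sum>j<(n::nat). r j * t j)" "\<forall>j<n. r j \<in> R \<and> t j \<in> S"
    unfolding span_mem by blast
  then show "a \<in> R" using assms by (auto intro!: R_sum R_mult)
qed

lemma span_dvd: assumes "a \<in> ideal_span_R R S" "\<And>s. s \<in> S \<Longrightarrow> d dvd s"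
  shows "d dvd a"
proof -
  obtain n r t where a: "a = (\<Sum>j<(n::nat). r j * t j)" "\<forall>j<n. r j \<in> R \<and> t j \<in> S"
    using assms(1) unfolding span_mem by blast
  then show ?thesis using assms(2) by (auto intro!: dvd_sum dvd_mult)
qed

lemma mpow_sub_R: "mpow R i \<subseteq> R"
proof (induction i)
  case 0 then show ?case by simp
next
  case (Suc i)
  have "{a * b |a b. a \<in> max_ideal R \<and> b \<in> mpow R i} \<subseteq> R"
    using Suc R_mult unfolding max_ideal_def by blast
  then show ?case by (simp add: span_sub_R)
qed

lemma mpow_0: "0 \<in> mpow R i"
  by (cases i) (auto simp: R_0 span_0)

lemma mpow_add: "a \<in> mpow R i \<Longrightarrow> b \<in> mpow R i \<Longrightarrow> a + b \<in> mpow R i"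
  by (cases i) (auto simp: R_add span_add)

lemma mpow_mult: "a \<in> mpow R i \<Longrightarrow> c \<in> R \<Longrightarrow> c * a \<in> mpow R i"
  by (cases i) (auto simp: R_mult span_mult)

lemma mpow_Suc_sub: "mpow R (Suc i) \<subseteq> mpow R i"
proof (induction i)
  case 0
  have "{a * b |a b. a \<in> max_ideal R \<and> b \<in> mpow R 0} \<subseteq> R"
    using R_mult unfolding max_ideal_def by auto
  then show ?case by (simp add: span_sub_R)
next
  case (Suc i)
  have "{a * b |a b. a \<in> max_ideal R \<and> b \<in> mpow R (Suc i)} \<subseteq> {a * b |a b. a \<in> max_ideal R \<and> b \<in> mpow R i}"
    using Suc by blast
  then show ?case by (simp only: mpow.simps span_mono)
qed

lemma mpow_anti: "i \<le> j \<Longrightarrow> mpow R j \<subseteq> mpow R i"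
proof (induction j)
  case 0 then show ?case by simp
next
  case (Suc j)
  then show ?case using mpow_Suc_sub[of j] by (cases "i = Suc j") auto
qed

lemma max_ideal_dvd: "a \<in> max_ideal R \<Longrightarrow> fps_X dvd a"
proof -
  assume "a \<in> max_ideal R"
  then have a0: "fps_nth a 0 = 0" unfolding max_ideal_def by auto
  show ?thesis
  proof (cases "a = 0")
    case False
    then have "1 \<le> subdegree a" using a0 subdegree_eq_0_iff[of a] by (cases "subdegree a") auto
    then have "a = fps_shift 1 a * fps_X" using fps_shift_times_fps_X by metis
    then show ?thesis by (metis dvd_triv_right)
  qed simp
qed

lemma mpow_dvd: "a \<in> mpow R i \<Longrightarrow> fps_X ^ i dvd a"
proof (induction i arbitrary: a)
  case 0 then show ?case by simp
next
  case (Suc i)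
  show ?case
  proof (rule span_dvd[of a "{a * b |a b. a \<in> max_ideal R \<and> b \<in> mpow R i}"])
    show "a \<in> ideal_span_R R {a * b |a b. a \<in> max_ideal R \<and> b \<in> mpow R i}" using Suc.prems by simp
  next
    fix s assume "s \<in> {a * b |a b. a \<in> max_ideal R \<and> b \<in> mpow R i}"
    then obtain p q where s: "s = p * q" "p \<in> max_ideal R" "q \<in> mpow R i" by blast
    have "fps_X dvd p" using max_ideal_dvd s(2) by blast
    moreover have "fps_X ^ i dvd q" using Suc.IH s(3) by blast
    ultimately show "fps_X ^ Suc i dvd s" using s(1) by (simp add: mult_dvd_mono)
  qed
qed

lemma dvd_subdeg: assumes "fps_X ^ i dvd (a::'a fps)" "a \<noteq> 0" shows "i \<le> subdegree a"
proof -
  obtain q where "a = fps_X ^ i * q" using assms(1) by blast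
  moreover then have "q \<noteq> 0" using assms(2) by auto
  ultimately show ?thesis using fps_subdegree_mult_fps_X_power(1)[of q i] by simp
qed

lemma mpow_subdeg: "a \<in> mpow R i \<Longrightarrow> a \<noteq> 0 \<Longrightarrow> i \<le> subdegree a"
  using mpow_dvd dvd_subdeg by blast

end


lemma greatest_props: fixes P :: "nat \<Rightarrow> bool"
  assumes "P k" "\<And>y. P y \<Longrightarrow> y \<le> b"
  shows "P (Greatest P)" "\<And>y. P y \<Longrightarrow> y \<le> Greatest P"
proof -
  show "P (Greatest P)" by (rule GreatestI_nat[of P k b]) (use assms in auto)
  show "\<And>y. P y \<Longrightarrow> y \<le> Greatest P" using Greatest_le_nat[of P _ b] assms(2) by blast
qed

lemma valset_mono: "A \<subseteq> B \<Longrightarrow> val_set A \<subseteq> val_set B"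
  unfolding val_set_def by blast

lemma valset_iff: "u \<in> val_set A \<longleftrightarrow> (\<exists>a\<in>A. a \<noteq> 0 \<and> subdegree a = u)"
  unfolding val_set_def by blast

lemma cancel_lead: fixes p q :: "'a::field fps"
  assumes "p \<noteq> 0" "q \<noteq> 0" "subdegree p = subdegree q"
  shows "\<exists>c. p - fps_const c * q = 0 \<or> subdegree p < subdegree (p - fps_const c * q)"
proof -
  let ?w = "subdegree p"
  let ?c = "fps_nth p ?w / fps_nth q ?w"
  have qw: "fps_nth q ?w \<noteq> 0" using assms by simp
  have "p - fps_const ?c * q = 0 \<or> subdegree p < subdegree (p - fps_const ?c * q)"
  proof (cases "p - fps_const ?c * q = 0")
    case False
    show ?thesis
    proof (rule disjI2, rule subdegree_greaterI[OF False])
      fix i assume "i \<le> ?w"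
      then consider "i < ?w" | "i = ?w" by linarith
      then show "fps_nth (p - fps_const ?c * q) i = 0"
      proof cases
        case 1
        have "fps_nth p i = 0" by (rule nth_less_subdegree_zero) (use 1 in simp)
        moreover have "fps_nth q i = 0" by (rule nth_less_subdegree_zero) (use 1 assms(3) in simp)
        ultimately show ?thesis by (simp only: fps_sub_nth fps_mult_left_const_nth mult_zero_right diff_zero)
      next
        case 2
        have "fps_nth (p - fps_const ?c * q) i = fps_nth p ?w - ?c * fps_nth q ?w"
          using 2 by (simp only: fps_sub_nth fps_mult_left_const_nth)
        also have "\<dots> = 0" using qw by (simp add: field_simps)
        finally show ?thesis .
      qed
    qed
  qed simp
  then show ?thesis by blast
qed

lemma smult_subdeg: "fps_const (c::'a::field) * q = 0 \<or> subdegree (fps_const c * q) = subdegree q"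
  by (cases "c = 0"; cases "q = 0") auto

definition kspace :: "'a::field fps set \<Rightarrow> bool" where
  "kspace V \<longleftrightarrow> 0 \<in> V \<and> (\<forall>a\<in>V. \<forall>b\<in>V. a + b \<in> V) \<and> (\<forall>c. \<forall>a\<in>V. fps_const c * a \<in> V)"

lemma ks_0: "kspace V \<Longrightarrow> 0 \<in> V" unfolding kspace_def by blast
lemma ks_add: "kspace V \<Longrightarrow> a \<in> V \<Longrightarrow> b \<in> V \<Longrightarrow> a + b \<in> V" unfolding kspace_def by blast
lemma ks_smult: "kspace V \<Longrightarrow> a \<in> V \<Longrightarrow> fps_const c * a \<in> V" unfolding kspace_def by blast
lemma ks_neg: "kspace V \<Longrightarrow> a \<in> V \<Longrightarrow> - a \<in> V"
  using ks_smult[of V a "-1"] by (simp add: fps_const_neg[symmetric])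
lemma ks_diff: "kspace V \<Longrightarrow> a \<in> V \<Longrightarrow> b \<in> V \<Longrightarrow> a - b \<in> V"
  using ks_add[of V a "-b"] ks_neg[of V b] by simp

lemma lemA:
  assumes V: "kspace V" and W: "kspace W"
    and cap: "val_set V \<inter> val_set W \<subseteq> val_set (V \<inter> W)"
  shows "val_set (sum_set V W) \<subseteq> val_set V \<union> val_set W"
proof
  fix u assume "u \<in> val_set (sum_set V W)"
  then obtain d a0 b0 where d: "d \<noteq> 0" "subdegree d = u" "d = a0 + b0" "a0 \<in> V" "b0 \<in> W"
    unfolding val_set_def sum_set_def by blast
  show "u \<in> val_set V \<union> val_set W"
  proof (rule ccontr)
    assume nu: "u \<notin> val_set V \<union> val_set W"
    have "\<forall>a b. u - subdegree a = n \<longrightarrow> a \<in> V \<longrightarrow> b \<in> W \<longrightarrow> a + b = d \<longrightarrow> False" for n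
    proof (induction n rule: less_induct)
      case (less n)
      show ?case
      proof (intro allI impI)
        fix a b assume n: "u - subdegree a = n" and ab: "a \<in> V" "b \<in> W" "a + b = d"
        have a0: "a \<noteq> 0" using ab d nu unfolding val_set_def by auto
        have b0: "b \<noteq> 0" using ab d nu unfolding val_set_def by auto
        consider "subdegree a < subdegree b" | "subdegree b < subdegree a" | "subdegree a = subdegree b"
          by linarith
        then show False
        proof cases
          case 1
          then have "subdegree d = subdegree a" using subdegree_add_eq1[OF a0 1] ab by simp
          then show False using nu ab a0 d unfolding val_set_def by auto
        next
          case 2
          then have "subdegree d = subdegree b" using subdegree_add_eq2[OF b0 2] ab by simp
          then show False using nu ab b0 d unfolding val_set_def by auto
        next
          case 3
          let ?w = "subdegree a"
          have "?w \<in> val_set V" using ab(1) a0 unfolding valset_iff by blast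
          moreover have "?w \<in> val_set W" using ab(2) b0 3 unfolding valset_iff by auto
          ultimately have "?w \<in> val_set V \<inter> val_set W" by blast
          then have "?w \<in> val_set (V \<inter> W)" using cap by blast
          then obtain c where c0: "c \<in> V \<inter> W" "c \<noteq> 0" "subdegree c = ?w"
            unfolding valset_iff by blast
          then have c: "c \<in> V" "c \<in> W" "c \<noteq> 0" "subdegree c = ?w" by auto
          obtain l where l: "a - fps_const l * c = 0 \<or> ?w < subdegree (a - fps_const l * c)"
            using cancel_lead[OF a0 c(3)] c(4) by auto
          define a' where "a' = a - fps_const l * c"
          define b' where "b' = b + fps_const l * c"
          have a'V: "a' \<in> V" unfolding a'_def using V ab c ks_diff ks_smult by blast
          have b'W: "b' \<in> W" unfolding b'_def using W ab c ks_add ks_smult by blast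
          have sum': "a' + b' = d" unfolding a'_def b'_def using ab by simp
          have a'0: "a' \<noteq> 0"
          proof
            assume "a' = 0" then have "d = b'" using sum' by simp
            then show False using nu b'W d unfolding val_set_def by auto
          qed
          have gt: "?w < subdegree a'" using l a'0 unfolding a'_def by auto
          have "?w \<le> u" using subdegree_add_ge'[of a b] ab d 3 by simp
          moreover have "?w \<noteq> u" using nu ab a0 unfolding val_set_def by auto
          ultimately have "u - subdegree a' < n" using gt n by linarith
          then show False using less.IH a'V b'W sum' by blast
        qed
      qed
    qed
    then show False using d by blast
  qed
qed

lemma lemB:
  assumes V: "kspace V" and W: "kspace W"
    and T: "\<And>g. fps_X ^ N * g \<in> V \<inter> W"
    and cup: "val_set (sum_set V W) \<subseteq> val_set V \<union> val_set W"
  shows "val_set V \<inter> val_set W \<subseteq> val_set (V \<inter> W)"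
proof
  fix u assume uu: "u \<in> val_set V \<inter> val_set W"
  have "u \<in> val_set V" "u \<in> val_set W" using uu by auto
  then obtain a0 b0 where a0: "a0 \<in> V" "a0 \<noteq> 0" "subdegree a0 = u"
     and b0: "b0 \<in> W" "b0 \<noteq> 0" "subdegree b0 = u" unfolding valset_iff by blast
  note ab0 = a0(1) b0(1) a0(2) b0(2) a0(3) b0(3)
  have claim: "\<forall>a b. N - subdegree (a - b) = n \<longrightarrow> a \<in> V \<longrightarrow> b \<in> W \<longrightarrow> a \<noteq> 0 \<longrightarrow> subdegree a = u \<longrightarrow>
      (a = b \<or> u < subdegree (a - b)) \<longrightarrow> u \<in> val_set (V \<inter> W)" for n
  proof (induction n rule: less_induct)
    case (less n)
    show ?case
    proof (intro allI impI)
      fix a b assume hn: "N - subdegree (a - b) = n" and a: "a \<in> V" and b: "b \<in> W" and a0: "a \<noteq> 0" and au: "subdegree a = u"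
        and h: "a = b \<or> u < subdegree (a - b)"
      show "u \<in> val_set (V \<inter> W)"
      proof (cases "a = b")
        case True
        then show ?thesis using a b a0 au unfolding val_set_def by auto
      next
        case False
        define d where "d = a - b"
        have d0: "d \<noteq> 0" using False unfolding d_def by simp
        have dw: "u < subdegree d" "N - subdegree d = n" using h hn False unfolding d_def by auto
        show ?thesis
        proof (cases "N \<le> subdegree d")
          case True
          have "d = fps_X ^ N * fps_shift N d"
            using subdegree_decompose'[OF True] by (simp add: mult.commute)
          then have dVW: "d \<in> V \<inter> W" using T by metis
          have "b = a - d" unfolding d_def by simp
          then have bV: "b \<in> V" using ks_diff[OF V a] dVW by auto
          have sd: "subdegree (a - d) = subdegree a" by (rule subdegree_diff_eq1[OF a0]) (use au dw in simp)
          have "a - d \<noteq> 0"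
          proof
            assume "a - d = 0" then have "a = d" by simp
            then show False using au dw by simp
          qed
          then have "b \<in> V \<inter> W" "b \<noteq> 0" "subdegree b = u"
            using bV b \<open>b = a - d\<close> sd au by auto
          then show ?thesis unfolding valset_iff by blast
        next
          case False
          have "d = a + (- b)" unfolding d_def by simp
          then have "d \<in> sum_set V W" using a ks_neg[OF W b] unfolding sum_set_def by blast
          then have "subdegree d \<in> val_set V \<union> val_set W" using cup d0 unfolding val_set_def by blast
          then show ?thesis
          proof
            assume "subdegree d \<in> val_set V"
            then obtain a' where a': "a' \<in> V" "a' \<noteq> 0" "subdegree a' = subdegree d"
              unfolding valset_iff by blast
            obtain l where l: "d - fps_const l * a' = 0 \<or> subdegree d < subdegree (d - fps_const l * a')"
              using cancel_lead[OF d0 a'(2)] a'(3) by auto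
            define a2 where "a2 = a - fps_const l * a'"
            have a2V: "a2 \<in> V" unfolding a2_def using ks_diff[OF V a] ks_smult[OF V a'(1)] by blast
            have a2u: "a2 \<noteq> 0 \<and> subdegree a2 = u"
            proof (cases "fps_const l * a' = 0")
              case True
              then have "a2 = a" unfolding a2_def by simp
              then show ?thesis using a0 au by simp
            next
              case False
              then have "subdegree (fps_const l * a') = subdegree d" using smult_subdeg[of l a'] a'(3) by auto
              then have "subdegree a < subdegree (fps_const l * a')" using au dw by simp
              then have sd: "subdegree a2 = subdegree a" unfolding a2_def by (rule subdegree_diff_eq1[OF a0])
              have "a2 \<noteq> 0"
              proof
                assume "a2 = 0" then have "a = fps_const l * a'" unfolding a2_def by simp
                then show False using \<open>subdegree a < subdegree (fps_const l * a')\<close> by simp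
              qed
              then show ?thesis using sd au by simp
            qed
            have eq: "a2 - b = d - fps_const l * a'" unfolding a2_def d_def by simp
            show ?thesis
            proof (cases "a2 = b")
              case True
              then show ?thesis using a2V b a2u unfolding valset_iff by auto
            next
              case ne: False
              have g: "u < subdegree (a2 - b)" using eq l dw ne by auto
              have lt: "N - subdegree (a2 - b) < n" using eq l dw False ne by auto
              show ?thesis
                by (rule less.IH[rule_format, OF lt refl a2V b]) (use a2u g in auto)
            qed
          next
            assume "subdegree d \<in> val_set W"
            then obtain b' where b': "b' \<in> W" "b' \<noteq> 0" "subdegree b' = subdegree d"
              unfolding valset_iff by blast
            obtain l where l: "d - fps_const l * b' = 0 \<or> subdegree d < subdegree (d - fps_const l * b')"
              using cancel_lead[OF d0 b'(2)] b'(3) by auto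
            define b2 where "b2 = b + fps_const l * b'"
            have b2W: "b2 \<in> W" unfolding b2_def using ks_add[OF W b] ks_smult[OF W b'(1)] by blast
            have eq: "a - b2 = d - fps_const l * b'" unfolding b2_def d_def by simp
            show ?thesis
            proof (cases "a = b2")
              case True
              then show ?thesis using a b2W a0 au unfolding valset_iff by auto
            next
              case ne: False
              have g: "u < subdegree (a - b2)" using eq l dw ne by auto
              have lt: "N - subdegree (a - b2) < n" using eq l dw False ne by auto
              show ?thesis
                by (rule less.IH[rule_format, OF lt refl a b2W]) (use a0 au g in auto)
            qed
          qed
        qed
      qed
    qed
  qed
  obtain l where l: "a0 - fps_const l * b0 = 0 \<or> subdegree a0 < subdegree (a0 - fps_const l * b0)"
    using cancel_lead[OF ab0(3) ab0(4)] ab0 by auto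
  have "fps_const l * b0 \<in> W" using ks_smult[OF W ab0(2)] .
  show "u \<in> val_set (V \<inter> W)"
    by (rule claim[rule_format, OF refl ab0(1) \<open>fps_const l * b0 \<in> W\<close> ab0(3) ab0(5)])
      (use l ab0 in auto)
qed



context fixes R :: "'a::field fps set" and x :: "'a fps"
  assumes SR: "setup_ring R" and xR: "x \<in> R" and xe: "subdegree x = mult_e R"
begin

lemma S_big: "\<exists>c. \<forall>n\<ge>c. n \<in> val_set R"
proof -
  obtain f where f: "f \<noteq> 0" "\<forall>g. f * g \<in> R" using R_cond[OF SR] by blast
  have "n \<in> val_set R" if "subdegree f \<le> n" for n
  proof -
    have "f * fps_X ^ (n - subdegree f) \<in> R" using f by blast
    moreover have "f * fps_X ^ (n - subdegree f) \<noteq> 0" using f by simp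
    moreover have "subdegree (f * fps_X ^ (n - subdegree f)) = n"
      using fps_subdegree_mult_fps_X_power(2)[OF f(1)] that by simp
    ultimately show ?thesis unfolding valset_iff by blast
  qed
  then show ?thesis by blast
qed

lemma e_props: "mult_e R \<in> val_set R" "0 < mult_e R"
proof -
  obtain c where c: "\<forall>n\<ge>c. n \<in> val_set R" using S_big by blast
  have "\<exists>s. s \<in> val_set R \<and> 0 < s" using c by (intro exI[of _ "Suc c"]) auto
  then have "mult_e R \<in> val_set R \<and> 0 < mult_e R" unfolding mult_e_def by (rule LeastI_ex)
  then show "mult_e R \<in> val_set R" "0 < mult_e R" by auto
qed

lemma x_ne: "x \<noteq> 0" using xe e_props(2) by auto

lemma x_max: "x \<in> max_ideal R"
  using xR xe e_props(2) unfolding max_ideal_def by (auto intro!: nth_less_subdegree_zero)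

lemma xpow_mpow: "r \<in> R \<Longrightarrow> x ^ i * r \<in> mpow R i"
proof (induction i)
  case 0 then show ?case by simp
next
  case (Suc i)
  have "x * (x ^ i * r) \<in> {a * b |a b. a \<in> max_ideal R \<and> b \<in> mpow R i}"
    using x_max Suc by blast
  then have "x * (x ^ i * r) \<in> mpow R (Suc i)" using span_gen[OF SR] by simp
  then show ?case by (simp add: mult.assoc)
qed

lemma X_mem: "a \<in> prin_ideal R x \<longleftrightarrow> (\<exists>r\<in>R. a = x * r)"
  unfolding prin_ideal_def by blast

lemma X_sub_R: "prin_ideal R x \<subseteq> R"
proof
  fix a assume "a \<in> prin_ideal R x"
  then obtain r where "r \<in> R" "a = x * r" unfolding X_mem by blast
  then show "a \<in> R" using xR R_mult[OF SR] by simp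
qed

lemma ks_X: "kspace (prin_ideal R x)"
proof -
  have 0: "0 \<in> prin_ideal R x" using R_0[OF SR] unfolding X_mem by (intro bexI[of _ 0]) auto
  have A: "a + b \<in> prin_ideal R x" if h: "a \<in> prin_ideal R x" "b \<in> prin_ideal R x" for a b
  proof -
    obtain r s where "r \<in> R" "s \<in> R" "a = x * r" "b = x * s" using h unfolding X_mem by blast
    then show ?thesis unfolding X_mem using R_add[OF SR] by (intro bexI[of _ "r + s"]) (auto simp: distrib_left)
  qed
  have M: "fps_const c * a \<in> prin_ideal R x" if h: "a \<in> prin_ideal R x" for a c
  proof -
    obtain r where "r \<in> R" "a = x * r" using h unfolding X_mem by blast
    then show ?thesis unfolding X_mem using R_mult[OF SR] R_const[OF SR]
      by (intro bexI[of _ "fps_const c * r"]) (auto simp: mult.left_commute)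
  qed
  show ?thesis unfolding kspace_def using 0 A M by blast
qed

lemma ks_M: "kspace (mpow R i)"
  unfolding kspace_def using mpow_0[OF SR] mpow_add[OF SR] mpow_mult[OF SR] R_const[OF SR] by blast

lemma valX: "u \<in> val_set (prin_ideal R x) \<longleftrightarrow> (\<exists>s\<in>val_set R. u = mult_e R + s)"
proof
  assume "u \<in> val_set (prin_ideal R x)"
  then obtain a where a: "a \<in> prin_ideal R x" "a \<noteq> 0" "subdegree a = u" unfolding valset_iff by blast
  then obtain r where "r \<in> R" "a = x * r" unfolding X_mem by blast
  then have r: "r \<in> R" "x * r \<noteq> 0" "subdegree (x * r) = u" using a by auto
  then have "r \<noteq> 0" by auto
  then have "subdegree r \<in> val_set R" "u = mult_e R + subdegree r" using r x_ne xe unfolding valset_iff by auto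
  then show "\<exists>s\<in>val_set R. u = mult_e R + s" by blast
next
  assume "\<exists>s\<in>val_set R. u = mult_e R + s"
  then obtain s where s: "s \<in> val_set R" "u = mult_e R + s" by blast
  then obtain r where r: "r \<in> R" "r \<noteq> 0" "u = mult_e R + subdegree r" unfolding valset_iff by blast
  then have "x * r \<in> prin_ideal R x" "x * r \<noteq> 0" "subdegree (x * r) = u"
    using x_ne xe unfolding X_mem by auto
  then show "u \<in> val_set (prin_ideal R x)" unfolding valset_iff by blast
qed

lemma T_lemma: "\<exists>N. \<forall>g. fps_X ^ N * g \<in> mpow R i \<inter> prin_ideal R x"
proof -
  obtain f where f: "f \<noteq> 0" "\<forall>g. f * g \<in> R" using R_cond[OF SR] by blast
  define p where "p = x ^ Suc i * f"
  have p0: "p \<noteq> 0" unfolding p_def using f x_ne by simp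
  define N where "N = subdegree p"
  define q where "q = fps_shift N p"
  have pq: "p = q * fps_X ^ N" unfolding q_def N_def by (rule subdegree_decompose)
  have q0: "fps_nth q 0 \<noteq> 0" unfolding q_def N_def using p0 by simp
  have "fps_X ^ N * g \<in> mpow R i \<inter> prin_ideal R x" for g
  proof -
    have "fps_X ^ N * g = p * (inverse q * g)"
      using inverse_mult_eq_1'[OF q0] pq
      by (metis (no_types, lifting) mult.assoc mult.commute mult_1)
    also have "\<dots> = x ^ Suc i * (f * (inverse q * g))" unfolding p_def by (simp add: mult.assoc)
    finally have eq: "fps_X ^ N * g = x ^ Suc i * (f * (inverse q * g))" .
    have fr: "f * (inverse q * g) \<in> R" using f by blast
    have "x ^ Suc i * (f * (inverse q * g)) \<in> mpow R i"
      using xpow_mpow[OF fr, of "Suc i"] mpow_Suc_sub[OF SR, of i] by blast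
    moreover have "x ^ Suc i * (f * (inverse q * g)) \<in> prin_ideal R x"
    proof -
      have "x ^ i * (f * (inverse q * g)) \<in> R" using xpow_mpow[OF fr, of i] mpow_sub_R[OF SR] by blast
      then show ?thesis unfolding X_mem by (intro bexI[of _ "x ^ i * (f * (inverse q * g))"]) (auto simp: mult.assoc)
    qed
    ultimately show ?thesis by (subst eq) (rule IntI)
  qed
  then show ?thesis by blast
qed

lemma apery_props: assumes "j < mult_e R"
  shows "apery R j \<in> val_set R" "apery R j mod mult_e R = j"
    "\<And>s. s \<in> val_set R \<Longrightarrow> s mod mult_e R = j \<Longrightarrow> apery R j \<le> s"
proof -
  obtain c where c: "\<forall>n\<ge>c. n \<in> val_set R" using S_big by blast
  have "c * 1 \<le> c * mult_e R" by (rule mult_le_mono2) (use e_props(2) in linarith)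
  then have "c \<le> c * mult_e R + j" by linarith
  then have "c * mult_e R + j \<in> val_set R" using c by blast
  moreover have "(c * mult_e R + j) mod mult_e R = j" using assms by simp
  ultimately have "\<exists>s. s \<in> val_set R \<and> s mod mult_e R = j" by blast
  then have "apery R j \<in> val_set R \<and> apery R j mod mult_e R = j" unfolding apery_def by (rule LeastI_ex)
  then show "apery R j \<in> val_set R" "apery R j mod mult_e R = j" by auto
  show "\<And>s. s \<in> val_set R \<Longrightarrow> s mod mult_e R = j \<Longrightarrow> apery R j \<le> s"
    unfolding apery_def by (rule Least_le) auto
qed

lemma apery_notX: assumes "j < mult_e R" shows "apery R j \<notin> val_set (prin_ideal R x)"
proof
  assume "apery R j \<in> val_set (prin_ideal R x)"
  then obtain s where s: "s \<in> val_set R" "apery R j = mult_e R + s" unfolding valX by blast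
  then have "s mod mult_e R = j" using apery_props(2)[OF assms] by simp
  then have "apery R j \<le> s" using apery_props(3)[OF assms s(1)] by blast
  then show False using s e_props(2) by simp
qed

lemma S_notX: assumes "s \<in> val_set R" "s \<notin> val_set (prin_ideal R x)"
  shows "s = apery R (s mod mult_e R)"
proof (rule ccontr)
  let ?e = "mult_e R"
  let ?w = "apery R (s mod ?e)"
  assume ne: "s \<noteq> ?w"
  have j: "s mod ?e < ?e" using e_props(2) by simp
  have le: "?w \<le> s" using apery_props(3)[OF j assms(1)] by simp
  then have lt: "?w < s" using ne by simp
  have "s mod ?e = ?w mod ?e" using apery_props(2)[OF j] by simp
  then have "?e dvd s - ?w" using mod_eq_dvd_iff_nat[OF le] by simp
  then obtain k where k: "s - ?w = ?e * k" by blast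
  then obtain k' where k': "k = Suc k'" using lt by (cases k) auto
  obtain a where a: "a \<in> R" "a \<noteq> 0" "subdegree a = ?w" using apery_props(1)[OF j] unfolding valset_iff by blast
  have xa: "x ^ k' * a \<in> R" using xpow_mpow[OF a(1), of k'] mpow_sub_R[OF SR] by blast
  have "x * (x ^ k' * a) \<in> prin_ideal R x" using xa unfolding X_mem by blast
  moreover have "x * (x ^ k' * a) \<noteq> 0" using x_ne a by simp
  moreover have "subdegree (x * (x ^ k' * a)) = s"
    using x_ne a xe k k' lt by (simp add: algebra_simps)
  ultimately have "s \<in> val_set (prin_ideal R x)" unfolding valset_iff by blast
  then show False using assms(2) by blast
qed

lemma vM_bound: "u \<in> val_set (mpow R i) \<Longrightarrow> i \<le> u"
  using mpow_subdeg[OF SR] unfolding valset_iff by blast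

lemma vM_anti: "i \<le> j \<Longrightarrow> val_set (mpow R j) \<subseteq> val_set (mpow R i)"
  using valset_mono mpow_anti[OF SR] by blast

lemma sum_sub_R: "sum_set (mpow R i) (prin_ideal R x) \<subseteq> R"
  unfolding sum_set_def using mpow_sub_R[OF SR] X_sub_R R_add[OF SR] by blast

lemma M_sub_sum: "mpow R i \<subseteq> sum_set (mpow R i) (prin_ideal R x)"
  unfolding sum_set_def using ks_0[OF ks_X] by force

lemma X_sub_sum: "prin_ideal R x \<subseteq> sum_set (mpow R i) (prin_ideal R x)"
  unfolding sum_set_def using mpow_0[OF SR] by force

lemma c_bound: assumes "j < mult_e R" "apery R j \<in> val_set (sum_set (mpow R i) (prin_ideal R x))"
  shows "i \<le> apery R j"
proof (rule ccontr)
  assume "\<not> i \<le> apery R j"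
  then have gt: "apery R j < i" by simp
  obtain a b where ab: "a \<in> mpow R i" "b \<in> prin_ideal R x" "a + b \<noteq> 0" "subdegree (a + b) = apery R j"
    using assms(2) unfolding valset_iff sum_set_def by blast
  have nb: "apery R j \<notin> val_set (prin_ideal R x)" using apery_notX[OF assms(1)] .
  have a0: "a \<noteq> 0" using ab nb unfolding valset_iff by auto
  have va: "i \<le> subdegree a" using mpow_subdeg[OF SR ab(1) a0] .
  have b0: "b \<noteq> 0" using ab va gt by auto
  show False
  proof (cases "subdegree b < subdegree a")
    case True
    then have "subdegree (a + b) = subdegree b" using subdegree_add_eq2[OF b0] by simp
    then show False using ab b0 nb unfolding valset_iff by auto
  next
    case False
    then have "subdegree (a + b) \<ge> subdegree a" using subdegree_add_ge'[OF ab(3)] by simp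
    then show False using ab va gt by simp
  qed
qed

lemma ord_props: assumes "a \<in> R" "a \<noteq> 0"
  shows "a \<in> mpow R (ord_m R a)" "\<And>i. a \<in> mpow R i \<Longrightarrow> i \<le> ord_m R a"
proof -
  have P0: "a \<in> mpow R 0" using assms by simp
  have B: "\<And>y. a \<in> mpow R y \<Longrightarrow> y \<le> subdegree a" using mpow_subdeg[OF SR] assms(2) by blast
  show "a \<in> mpow R (ord_m R a)" unfolding ord_m_def by (rule greatest_props(1)[of "\<lambda>i. a \<in> mpow R i" 0 "subdegree a", OF P0 B])
  show "\<And>i. a \<in> mpow R i \<Longrightarrow> i \<le> ord_m R a" unfolding ord_m_def by (rule greatest_props(2)[of "\<lambda>i. a \<in> mpow R i" 0 "subdegree a", OF P0 B])
qed

lemma vord_props: assumes "s \<in> val_set R"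
  shows "s \<in> val_set (mpow R (vord R s))" "\<And>i. s \<in> val_set (mpow R i) \<Longrightarrow> i \<le> vord R s"
proof -
  have P0: "s \<in> val_set (mpow R 0)" using assms by simp
  have B: "\<And>y. s \<in> val_set (mpow R y) \<Longrightarrow> y \<le> s" using vM_bound by blast
  show "s \<in> val_set (mpow R (vord R s))" unfolding vord_def by (rule greatest_props(1)[of "\<lambda>i. s \<in> val_set (mpow R i)" 0 "s", OF P0 B])
  show "\<And>i. s \<in> val_set (mpow R i) \<Longrightarrow> i \<le> vord R s" unfolding vord_def by (rule greatest_props(2)[of "\<lambda>i. s \<in> val_set (mpow R i)" 0 "s", OF P0 B])
qed

lemma b_vord: "b_idx R j = vord R (apery R j)"
  unfolding b_idx_def vord_def ..

lemma c_props: assumes "j < mult_e R"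
  shows "apery R j \<in> val_set (sum_set (mpow R (c_idx R x j)) (prin_ideal R x))"
    "\<And>i. apery R j \<in> val_set (sum_set (mpow R i) (prin_ideal R x)) \<Longrightarrow> i \<le> c_idx R x j"
proof -
  have P0: "apery R j \<in> val_set (sum_set (mpow R 0) (prin_ideal R x))"
    using apery_props(1)[OF assms] valset_mono[OF M_sub_sum[of 0]] by auto
  have B: "\<And>y. apery R j \<in> val_set (sum_set (mpow R y) (prin_ideal R x)) \<Longrightarrow> y \<le> apery R j"
    using c_bound[OF assms] by blast
  show "apery R j \<in> val_set (sum_set (mpow R (c_idx R x j)) (prin_ideal R x))"
    unfolding c_idx_def by (rule greatest_props(1)[of "\<lambda>i. apery R j \<in> val_set (sum_set (mpow R i) (prin_ideal R x))" 0 "apery R j", OF P0 B])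
  show "\<And>i. apery R j \<in> val_set (sum_set (mpow R i) (prin_ideal R x)) \<Longrightarrow> i \<le> c_idx R x j"
    unfolding c_idx_def by (rule greatest_props(2)[of "\<lambda>i. apery R j \<in> val_set (sum_set (mpow R i) (prin_ideal R x))" 0 "apery R j", OF P0 B])
qed

end


theorem proposition1p2:
  fixes R :: "'a::field fps set" and x :: "'a fps"
  assumes "setup_ring R"
    and "x \<in> R"
    and "subdegree x = mult_e R"
  shows "(ess_divisible R x \<longleftrightarrow>
           (\<forall>i. val_set (mpow R i \<inter> prin_ideal R x) = val_set (mpow R i) \<inter> val_set (prin_ideal R x)))
       \<and> (ess_divisible R x \<longleftrightarrow>
           (\<forall>i. val_set (sum_set (mpow R i) (prin_ideal R x)) = val_set (mpow R i) \<union> val_set (prin_ideal R x)))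
       \<and> (ess_divisible R x \<longleftrightarrow> (\<forall>j < mult_e R. b_idx R j = c_idx R x j))"
proof -
  note SR = assms(1)
  let ?X = "prin_ideal R x"
  have t1: "val_set (mpow R i \<inter> ?X) \<subseteq> val_set (mpow R i) \<inter> val_set ?X" for i
    using valset_mono[OF Int_lower1] valset_mono[OF Int_lower2] by blast
  have t2: "val_set (mpow R i) \<union> val_set ?X \<subseteq> val_set (sum_set (mpow R i) ?X)" for i
    using valset_mono[OF M_sub_sum[OF assms]] valset_mono[OF X_sub_sum[OF assms]] by blast
  have vXS: "val_set ?X \<subseteq> val_set R" using valset_mono[OF X_sub_R[OF assms]] .
  have P23: "(val_set (mpow R i \<inter> ?X) = val_set (mpow R i) \<inter> val_set ?X) \<longleftrightarrow>
             (val_set (sum_set (mpow R i) ?X) = val_set (mpow R i) \<union> val_set ?X)" for i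
  proof
    assume "val_set (mpow R i \<inter> ?X) = val_set (mpow R i) \<inter> val_set ?X"
    then have cap: "val_set (mpow R i) \<inter> val_set ?X \<subseteq> val_set (mpow R i \<inter> ?X)" by simp
    show "val_set (sum_set (mpow R i) ?X) = val_set (mpow R i) \<union> val_set ?X"
      using lemA[OF ks_M[OF assms] ks_X[OF assms] cap] t2[of i] by blast
  next
    assume "val_set (sum_set (mpow R i) ?X) = val_set (mpow R i) \<union> val_set ?X"
    then have cup: "val_set (sum_set (mpow R i) ?X) \<subseteq> val_set (mpow R i) \<union> val_set ?X" by simp
    obtain N where T: "\<forall>g. fps_X ^ N * g \<in> mpow R i \<inter> ?X" using T_lemma[OF assms] by blast
    show "val_set (mpow R i \<inter> ?X) = val_set (mpow R i) \<inter> val_set ?X"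
      using lemB[OF ks_M[OF assms] ks_X[OF assms] _ cup, of N] T t1[of i] by blast
  qed
  have P12: "ess_divisible R x \<longleftrightarrow>
      (\<forall>i. val_set (mpow R i \<inter> ?X) = val_set (mpow R i) \<inter> val_set ?X)"
  proof
    assume ED: "ess_divisible R x"
    show "\<forall>i. val_set (mpow R i \<inter> ?X) = val_set (mpow R i) \<inter> val_set ?X"
    proof
      fix i
      have "val_set (mpow R i) \<inter> val_set ?X \<subseteq> val_set (mpow R i \<inter> ?X)"
      proof
        fix u assume u: "u \<in> val_set (mpow R i) \<inter> val_set ?X"
        then have uX: "u \<in> val_set ?X" by blast
        obtain a where a: "a \<in> ?X" "a \<noteq> 0" "subdegree a = u" "ord_m R a = vord R u"
          using ED uX unfolding ess_divisible_def by blast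
        have uS: "u \<in> val_set R" using uX vXS by blast
        have "i \<le> vord R u" using vord_props(2)[OF assms uS] u by blast
        moreover have aR: "a \<in> R" using a(1) X_sub_R[OF assms] by blast
        ultimately have "a \<in> mpow R i"
          using ord_props(1)[OF assms aR a(2)] a(4) mpow_anti[OF SR, of i "ord_m R a"] by auto
        then show "u \<in> val_set (mpow R i \<inter> ?X)" using a unfolding valset_iff by blast
      qed
      then show "val_set (mpow R i \<inter> ?X) = val_set (mpow R i) \<inter> val_set ?X" using t1[of i] by blast
    qed
  next
    assume H: "\<forall>i. val_set (mpow R i \<inter> ?X) = val_set (mpow R i) \<inter> val_set ?X"
    show "ess_divisible R x" unfolding ess_divisible_def
    proof
      fix u assume uX: "u \<in> val_set ?X"
      have uS: "u \<in> val_set R" using uX vXS by blast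
      have "u \<in> val_set (mpow R (vord R u))" using vord_props(1)[OF assms uS] .
      then have "u \<in> val_set (mpow R (vord R u) \<inter> ?X)" using H uX by blast
      then obtain a where a: "a \<in> mpow R (vord R u)" "a \<in> ?X" "a \<noteq> 0" "subdegree a = u"
        unfolding valset_iff by blast
      have aR: "a \<in> R" using a(2) X_sub_R[OF assms] by blast
      have "vord R u \<le> ord_m R a" using ord_props(2)[OF assms aR a(3) a(1)] .
      moreover have "u \<in> val_set (mpow R (ord_m R a))"
        using ord_props(1)[OF assms aR a(3)] a(3,4) unfolding valset_iff by blast
      then have "ord_m R a \<le> vord R u" using vord_props(2)[OF assms uS] by blast
      ultimately show "\<exists>a\<in>?X. a \<noteq> 0 \<and> subdegree a = u \<and> ord_m R a = vord R u"
        using a by auto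
    qed
  qed
  have P34: "(\<forall>i. val_set (sum_set (mpow R i) ?X) = val_set (mpow R i) \<union> val_set ?X) \<longleftrightarrow>
             (\<forall>j < mult_e R. b_idx R j = c_idx R x j)"
  proof
    assume H3: "\<forall>i. val_set (sum_set (mpow R i) ?X) = val_set (mpow R i) \<union> val_set ?X"
    show "\<forall>j < mult_e R. b_idx R j = c_idx R x j"
    proof (intro allI impI)
      fix j assume j: "j < mult_e R"
      have aS: "apery R j \<in> val_set R" using apery_props(1)[OF assms j] .
      have "apery R j \<in> val_set (mpow R (b_idx R j))"
        unfolding b_vord[OF assms] using vord_props(1)[OF assms aS] .
      then have "apery R j \<in> val_set (sum_set (mpow R (b_idx R j)) ?X)" using t2 by blast
      then have le1: "b_idx R j \<le> c_idx R x j" using c_props(2)[OF assms j] by blast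
      have "apery R j \<in> val_set (sum_set (mpow R (c_idx R x j)) ?X)" using c_props(1)[OF assms j] .
      then have "apery R j \<in> val_set (mpow R (c_idx R x j))" using H3 apery_notX[OF assms j] by blast
      then have le2: "c_idx R x j \<le> b_idx R j" unfolding b_vord[OF assms] using vord_props(2)[OF assms aS] by blast
      show "b_idx R j = c_idx R x j" using le1 le2 by simp
    qed
  next
    assume H4: "\<forall>j < mult_e R. b_idx R j = c_idx R x j"
    show "\<forall>i. val_set (sum_set (mpow R i) ?X) = val_set (mpow R i) \<union> val_set ?X"
    proof
      fix i
      have "val_set (sum_set (mpow R i) ?X) \<subseteq> val_set (mpow R i) \<union> val_set ?X"
      proof
        fix u assume u: "u \<in> val_set (sum_set (mpow R i) ?X)"
        have uS: "u \<in> val_set R" using u valset_mono[OF sum_sub_R[OF assms]] by blast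
        show "u \<in> val_set (mpow R i) \<union> val_set ?X"
        proof (cases "u \<in> val_set ?X")
          case False
          define j where "j = u mod mult_e R"
          have j: "j < mult_e R" unfolding j_def using e_props(2)[OF assms] by simp
          have uw: "u = apery R j" unfolding j_def using S_notX[OF assms uS False] .
          have "i \<le> c_idx R x j" using c_props(2)[OF assms j] u uw by blast
          then have ib: "i \<le> vord R (apery R j)" using H4 j b_vord[OF assms] by simp
          have "apery R j \<in> val_set (mpow R (vord R (apery R j)))"
            using vord_props(1)[OF assms apery_props(1)[OF assms j]] .
          then have "u \<in> val_set (mpow R i)" using vM_anti[OF assms ib] uw by blast
          then show ?thesis by blast
        qed blast
      qed
      then show "val_set (sum_set (mpow R i) ?X) = val_set (mpow R i) \<union> val_set ?X" using t2[of i] by blast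
    qed
  qed
  have Q: "(\<forall>i. val_set (mpow R i \<inter> ?X) = val_set (mpow R i) \<inter> val_set ?X) \<longleftrightarrow>
           (\<forall>i. val_set (sum_set (mpow R i) ?X) = val_set (mpow R i) \<union> val_set ?X)"
    by (simp only: P23)
  show ?thesis by (simp only: P12 Q P34 simp_thms)
qed

end
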